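(* Let $n\ge4$ and let $\textnormal{Reg}(\mathcal{OCT}_n)$ be the set of regular elements of $\mathcal{OCT}_n$. Then the rank of the semigroup $\textnormal{Reg}(\mathcal{OCT}_n)$ is $3$.
   Context: $\mathcal{T}_n$ is the full transformation semigroup on $[n]=\{1,\dots,n\}$ under composition. $\alpha$ is a contraction if $|x\alpha-y\alpha|\le|x-y|$ for all $x,y$, order-preserving if $x\le y\Rightarrow x\alpha\le y\alpha$. $\mathcal{OCT}_n$ is the semigroup of order-preserving contractions; $\alpha\in\mathcal{OCT}_n$ is regular if $\alpha\beta\alpha=\alpha$ for some $\beta\in\mathcal{OCT}_n$; these form a subsemigroup. The rank of a semigroup is the minimum cardinality of a generating set. *)

theory Defs
  imports Main "HOL-Library.FuncSet"
begin

definition Tn :: "nat \<Rightarrow> (nat \<Rightarrow> nat) set" where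
  "Tn n = ({1..n} \<rightarrow>\<^sub>E {1..n})"

text \<open>Composition with maps acting on the right: x (a b) = (x a) b.\<close>
definition tcomp :: "nat \<Rightarrow> (nat \<Rightarrow> nat) \<Rightarrow> (nat \<Rightarrow> nat) \<Rightarrow> (nat \<Rightarrow> nat)" where
  "tcomp n a b = restrict (\<lambda>x. b (a x)) {1..n}"

definition order_preserving :: "nat \<Rightarrow> (nat \<Rightarrow> nat) \<Rightarrow> bool" where
  "order_preserving n a \<longleftrightarrow> (\<forall>x\<in>{1..n}. \<forall>y\<in>{1..n}. x \<le> y \<longrightarrow> a x \<le> a y)"

definition contraction :: "nat \<Rightarrow> (nat \<Rightarrow> nat) \<Rightarrow> bool" where
  "contraction n a \<longleftrightarrow>
     (\<forall>x\<in>{1..n}. \<forall>y\<in>{1..n}. \<bar>int (a x) - int (a y)\<bar> \<le> \<bar>int x - int y\<bar>)"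

definition OCT :: "nat \<Rightarrow> (nat \<Rightarrow> nat) set" where
  "OCT n = {a \<in> Tn n. order_preserving n a \<and> contraction n a}"

definition RegOCT :: "nat \<Rightarrow> (nat \<Rightarrow> nat) set" where
  "RegOCT n = {a \<in> OCT n. \<exists>b \<in> OCT n. tcomp n (tcomp n a b) a = a}"

inductive_set gen :: "nat \<Rightarrow> (nat \<Rightarrow> nat) set \<Rightarrow> (nat \<Rightarrow> nat) set"
  for n :: nat and A :: "(nat \<Rightarrow> nat) set" where
  base: "a \<in> A \<Longrightarrow> a \<in> gen n A"
| step: "a \<in> gen n A \<Longrightarrow> b \<in> gen n A \<Longrightarrow> tcomp n a b \<in> gen n A"

definition sg_rank :: "nat \<Rightarrow> (nat \<Rightarrow> nat) set \<Rightarrow> nat" where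
  "sg_rank n S = (LEAST k. \<exists>A. A \<subseteq> S \<and> finite A \<and> card A = k \<and> gen n A = S)"

end

theory Submission imports Defs begin

lemma tcomp_app[simp]: "x \<in> {1..n} \<Longrightarrow> tcomp n a b x = b (a x)"
  by (simp add: tcomp_def)

lemma OCT_D: assumes "a \<in> OCT n"
  shows "a \<in> Tn n" "order_preserving n a" "contraction n a"
  using assms by (auto simp: OCT_def)

lemma OCT_range: "a \<in> OCT n \<Longrightarrow> x \<in> {1..n} \<Longrightarrow> a x \<in> {1..n}"
  by (auto simp: OCT_def Tn_def)

lemma OCT_mono: "a \<in> OCT n \<Longrightarrow> x \<in> {1..n} \<Longrightarrow> y \<in> {1..n} \<Longrightarrow> x \<le> y \<Longrightarrow> a x \<le> a y"
  by (auto simp: OCT_def order_preserving_def)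

lemma OCT_step: assumes "a \<in> OCT n" "1 \<le> x" "x < n"
  shows "a (Suc x) = a x \<or> a (Suc x) = Suc (a x)"
proof -
  have "a x \<le> a (Suc x)" using OCT_mono[OF assms(1)] assms by auto
  moreover have "\<bar>int (a x) - int (a (Suc x))\<bar> \<le> \<bar>int x - int (Suc x)\<bar>"
  proof -
    have c: "contraction n a" using assms(1) by (simp add: OCT_def)
    have "x \<in> {1..n}" "Suc x \<in> {1..n}" using assms by auto
    then show ?thesis using c unfolding contraction_def by blast
  qed
  ultimately show ?thesis by auto
qed

lemma Tn_eqI: "f \<in> Tn n \<Longrightarrow> g \<in> Tn n \<Longrightarrow> (\<And>x. x \<in> {1..n} \<Longrightarrow> f x = g x) \<Longrightarrow> f = g"
  unfolding Tn_def by (metis PiE_ext)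

lemma tcomp_Tn: "a \<in> Tn n \<Longrightarrow> b \<in> Tn n \<Longrightarrow> tcomp n a b \<in> Tn n"
  by (auto simp: Tn_def tcomp_def)

lemma tcomp_OCT: assumes "a \<in> OCT n" "b \<in> OCT n" shows "tcomp n a b \<in> OCT n"
proof -
  have r: "\<And>x. x \<in> {1..n} \<Longrightarrow> a x \<in> {1..n}" using OCT_range[OF assms(1)] by auto
  have "tcomp n a b \<in> Tn n" using tcomp_Tn OCT_D assms by blast
  moreover have "order_preserving n (tcomp n a b)"
    unfolding order_preserving_def using r OCT_mono[OF assms(1)] OCT_mono[OF assms(2)] by simp
  moreover have "contraction n (tcomp n a b)"
    unfolding contraction_def
  proof (intro ballI)
    fix x y assume xy: "x \<in> {1..n}" "y \<in> {1..n}"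
    have "\<bar>int (b (a x)) - int (b (a y))\<bar> \<le> \<bar>int (a x) - int (a y)\<bar>"
      using assms(2) r xy by (auto simp: OCT_def contraction_def)
    also have "\<dots> \<le> \<bar>int x - int y\<bar>" using assms(1) xy by (auto simp: OCT_def contraction_def)
    finally show "\<bar>int (tcomp n a b x) - int (tcomp n a b y)\<bar> \<le> \<bar>int x - int y\<bar>" using xy by simp
  qed
  ultimately show ?thesis by (simp add: OCT_def)
qed

lemma tcomp_assoc: "a \<in> Tn n \<Longrightarrow> tcomp n (tcomp n a b) c = tcomp n a (tcomp n b c)"
  by (auto simp: tcomp_def Tn_def fun_eq_iff)

definition idn :: "nat \<Rightarrow> nat \<Rightarrow> nat" where "idn n = (\<lambda>x\<in>{1..n}. x)"

lemma idn_left: "a \<in> Tn n \<Longrightarrow> tcomp n (idn n) a = a"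
  by (auto simp: tcomp_def Tn_def idn_def fun_eq_iff)
lemma idn_right: "a \<in> Tn n \<Longrightarrow> tcomp n a (idn n) = a"
  by (auto simp: tcomp_def Tn_def idn_def fun_eq_iff PiE_def extensional_def)

definition clampf :: "nat \<Rightarrow> int \<Rightarrow> int \<Rightarrow> int \<Rightarrow> nat \<Rightarrow> nat" where
  "clampf n a b d = (\<lambda>x\<in>{1..n}. nat (min b (max a (int x + d))))"

lemma clampf_OCT: assumes "1 \<le> a" "a \<le> b" "b \<le> int n" shows "clampf n a b d \<in> OCT n"
  using assms unfolding OCT_def Tn_def clampf_def order_preserving_def contraction_def
  by (auto simp: PiE_def extensional_def)

lemma clampf_val: "x \<in> {1..n} \<Longrightarrow> 0 \<le> A \<Longrightarrow> A \<le> B \<Longrightarrow> int (clampf n A B d x) = min B (max A (int x + d))"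
  by (simp add: clampf_def) (simp add: max_def)

lemma OCT_interval: assumes "a \<in> OCT n" "a 1 \<le> y" "y \<le> a m" "1 \<le> m" "m \<le> n"
  shows "\<exists>z\<in>{1..n}. a z = y"
  using assms(3-5)
proof (induction m)
  case 0 then show ?case by simp
next
  case (Suc m)
  show ?case
  proof (cases "m = 0")
    case True then show ?thesis using Suc.prems assms(2) by (intro bexI[of _ 1]) auto
  next
    case False
    show ?thesis
    proof (cases "y \<le> a m")
      case True then show ?thesis using Suc False by auto
    next
      case F: False
      have "a (Suc m) = a m \<or> a (Suc m) = Suc (a m)" using OCT_step[OF assms(1), of m] False Suc.prems by auto
      then have "a (Suc m) = y" using F Suc.prems by auto
      then show ?thesis using Suc.prems by (intro bexI[of _ "Suc m"]) auto
    qed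
  qed
qed

definition Pc :: "nat \<Rightarrow> (nat \<Rightarrow> nat) \<Rightarrow> bool" where
  "Pc n a \<longleftrightarrow> (\<forall>x. 1 \<le> x \<longrightarrow> x < n \<longrightarrow> a (Suc x) = a x \<longrightarrow> a x = a 1 \<or> a x = a n)"

lemma OCT_contr: "a \<in> OCT n \<Longrightarrow> x \<in> {1..n} \<Longrightarrow> y \<in> {1..n} \<Longrightarrow> \<bar>int (a x) - int (a y)\<bar> \<le> \<bar>int x - int y\<bar>"
  unfolding OCT_def contraction_def by blast

lemma Reg_Pc: assumes "f \<in> RegOCT n" shows "Pc n f"
proof -
  obtain b where a: "f \<in> OCT n" and b: "b \<in> OCT n" and e: "tcomp n (tcomp n f b) f = f"
    using assms by (auto simp: RegOCT_def)
  have key: "f (b (f z)) = f z" if z: "z \<in> {1..n}" for z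
  proof -
    have "tcomp n (tcomp n f b) f z = f z" using e by simp
    then show ?thesis using z OCT_range[OF a z] by simp
  qed
  show ?thesis unfolding Pc_def
  proof (intro allI impI, rule ccontr)
    fix x assume x1: "1 \<le> x" and xn: "x < n" and eq: "f (Suc x) = f x" and ne: "\<not> (f x = f 1 \<or> f x = f n)"
    define v where "v = f x"
    have "f 1 \<le> v" "v \<le> f n" using OCT_mono[OF a] x1 xn by (auto simp: v_def)
    then have v1: "f 1 < v" and v2: "v < f n" using ne v_def by auto
    have "f 1 \<le> v - 1" "v - 1 \<le> f n" using v1 v2 by auto
    then have "\<exists>z\<in>{1..n}. f z = v - 1"
      using OCT_interval[OF a, of "v - 1" n] xn x1 by simp
    then obtain p where p: "p \<in> {1..n}" "f p = v - 1" by blast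
    have "f 1 \<le> v + 1" "v + 1 \<le> f n" using v1 v2 by auto
    then have "\<exists>z\<in>{1..n}. f z = v + 1"
      using OCT_interval[OF a, of "v + 1" n] xn x1 by simp
    then obtain q where q: "q \<in> {1..n}" "f q = v + 1" by blast
    have xin: "x \<in> {1..n}" "Suc x \<in> {1..n}" using x1 xn by auto
    define u where "u = b v"
    define u1 where "u1 = b (f p)"
    define u2 where "u2 = b (f q)"
    have fu: "f u = v" using key[OF xin(1)] by (simp add: u_def v_def)
    have fu1: "f u1 = v - 1" using key[OF p(1)] p by (simp add: u1_def)
    have fu2: "f u2 = v + 1" using key[OF q(1)] q by (simp add: u2_def)
    have vin: "v \<in> {1..n}" "f p \<in> {1..n}" "f q \<in> {1..n}"
      using OCT_range[OF a xin(1)] OCT_range[OF a p(1)] OCT_range[OF a q(1)] v_def by simp_all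
    have "u1 \<le> u" using OCT_mono[OF b vin(2) vin(1)] p by (simp add: u1_def u_def)
    moreover have "\<bar>int u1 - int u\<bar> \<le> \<bar>int (f p) - int v\<bar>"
      using OCT_contr[OF b vin(2) vin(1)] by (simp add: u1_def u_def)
    moreover have "u1 \<noteq> u" using fu fu1 v1 by auto
    ultimately have uu1: "u1 + 1 = u" using p v1 by auto
    have "u \<le> u2" using OCT_mono[OF b vin(1) vin(3)] q by (simp add: u2_def u_def)
    moreover have "\<bar>int u - int u2\<bar> \<le> \<bar>int v - int (f q)\<bar>"
      using OCT_contr[OF b vin(1) vin(3)] by (simp add: u2_def u_def)
    moreover have "u2 \<noteq> u" using fu fu2 by auto
    ultimately have uu2: "u2 = u + 1" using q by auto
    have uin: "u1 \<in> {1..n}" "u2 \<in> {1..n}"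
      using OCT_range[OF b vin(2)] OCT_range[OF b vin(3)] u1_def u2_def by simp_all
    show False
    proof (cases "x < u")
      case True
      then have "x \<le> u1" using uu1 by auto
      then have "f x \<le> f u1" using OCT_mono[OF a xin(1) uin(1)] by auto
      then show False using fu1 v1 v_def by auto
    next
      case False
      then have "u2 \<le> Suc x" using uu2 by auto
      then have "f u2 \<le> f (Suc x)" using OCT_mono[OF a uin(2) xin(2)] by auto
      then show False using fu2 eq v_def by auto
    qed
  qed
qed

lemma Pc_tcomp: assumes a: "a \<in> OCT n" and b: "b \<in> OCT n" and pa: "Pc n a" and pb: "Pc n b"
  shows "Pc n (tcomp n a b)"
  unfolding Pc_def
proof (intro allI impI)
  fix x assume x1: "1 \<le> x" and xn: "x < n" and eq: "tcomp n a b (Suc x) = tcomp n a b x"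
  have xin: "x \<in> {1..n}" "Suc x \<in> {1..n}" "1 \<in> {1..n}" "n \<in> {1..n}" using x1 xn by auto
  have eq': "b (a (Suc x)) = b (a x)" using eq xin by simp
  have r: "a x \<in> {1..n}" "a (Suc x) \<in> {1..n}" "a 1 \<in> {1..n}" "a n \<in> {1..n}"
    using OCT_range[OF a] xin by auto
  have goal: "b (a x) = b (a 1) \<or> b (a x) = b (a n)"
  proof (cases "a (Suc x) = a x")
    case True
    then have "a x = a 1 \<or> a x = a n" using pa x1 xn unfolding Pc_def by blast
    then show ?thesis by auto
  next
    case False
    then have s: "a (Suc x) = Suc (a x)" using OCT_step[OF a x1 xn] by auto
    then have "b (Suc (a x)) = b (a x)" using eq' by simp
    moreover have "1 \<le> a x" "a x < n" using r s by auto
    ultimately have "b (a x) = b 1 \<or> b (a x) = b n" using pb unfolding Pc_def by metis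
    moreover have "b 1 \<le> b (a 1)" "b (a 1) \<le> b (a x)"
      using OCT_mono[OF b] r xin OCT_mono[OF a xin(3) xin(1)] x1 by auto
    moreover have "b (a x) \<le> b (a n)" "b (a n) \<le> b n"
      using OCT_mono[OF b] r xin OCT_mono[OF a xin(1) xin(4)] xn by auto
    ultimately show ?thesis by linarith
  qed
  then show "tcomp n a b x = tcomp n a b 1 \<or> tcomp n a b x = tcomp n a b n" using xin by simp
qed

definition Cs :: "nat \<Rightarrow> (nat \<Rightarrow> nat) set" where
  "Cs n = {f. \<exists>A B d. 1 \<le> A \<and> A \<le> B \<and> B \<le> int n \<and> d \<le> A - 1 \<and> B \<le> int n + d \<and> f = clampf n A B d}"

lemma Pc_Cs: assumes a: "f \<in> OCT n" and p: "Pc n f" and n: "1 \<le> n" shows "f \<in> Cs n"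
proof -
  define S where "S = {x\<in>{1..n}. f x = f 1}"
  have fS: "finite S" "1 \<in> S" using n by (auto simp: S_def)
  define m where "m = Max S"
  have "S \<noteq> {}" using fS by auto
  then have mS: "m \<in> S" using fS(1) Max_in[of S] m_def by blast
  have m1: "1 \<le> m" "m \<le> n" "f m = f 1" using mS by (auto simp: S_def)
  have mmax: "x \<le> m" if "x \<in> {1..n}" "f x = f 1" for x
    using that fS m_def by (auto simp: S_def)
  define A where "A = int (f 1)"
  define B where "B = int (f n)"
  define d where "d = A - int m"
  have in1: "1 \<in> {1..n}" "n \<in> {1..n}" using n by auto
  have A1: "1 \<le> A" "A \<le> B" "B \<le> int n"
    using OCT_range[OF a in1(1)] OCT_range[OF a in1(2)] OCT_mono[OF a in1(1) in1(2)] n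
    by (auto simp: A_def B_def)
  have claim: "int (f x) = min B (max A (int x + d))" if "1 \<le> x" "x \<le> n" for x
    using that
  proof (induction x)
    case 0 then show ?case by simp
  next
    case (Suc x)
    show ?case
    proof (cases "x = 0")
      case True then show ?thesis using m1 A1 by (simp add: A_def d_def)
    next
      case False
      then have x1: "1 \<le> x" "x < n" using Suc.prems by auto
      have IH: "int (f x) = min B (max A (int x + d))" using Suc.IH x1 by simp
      have xin: "x \<in> {1..n}" "Suc x \<in> {1..n}" using x1 by auto
      have le: "f 1 \<le> f (Suc x)" "f (Suc x) \<le> f n" "f x \<le> f (Suc x)"
        using OCT_mono[OF a] xin in1 by auto
      show ?thesis
      proof (cases "Suc x \<le> m")
        case True
        have "m \<in> {1..n}" using m1 by auto
        then have "f (Suc x) \<le> f m" using OCT_mono[OF a xin(2)] True by blast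
        then have "f (Suc x) = f 1" using le m1 by auto
        then show ?thesis using True A1 by (simp add: A_def d_def)
      next
        case False
        then have ne: "f (Suc x) \<noteq> f 1" using mmax[OF xin(2)] by auto
        have st: "f (Suc x) = f x \<or> f (Suc x) = Suc (f x)" using OCT_step[OF a x1] .
        show ?thesis
        proof (cases "f (Suc x) = f x")
          case True
          then have "f x = f 1 \<or> f x = f n" using p x1 unfolding Pc_def by blast
          then have "f (Suc x) = f n" using True ne by auto
          then show ?thesis using IH True A1 by (simp add: B_def)
        next
          case F: False
          then have s: "f (Suc x) = Suc (f x)" using st by auto
          have "int x + d \<ge> A" using False by (simp add: d_def)
          then show ?thesis using IH s le A1 by (simp add: B_def)
        qed
      qed
    qed
  qed
  have fc: "f = clampf n A B d"
  proof (rule Tn_eqI)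
    show "f \<in> Tn n" using OCT_D[OF a] by simp
    show "clampf n A B d \<in> Tn n" using OCT_D(1)[OF clampf_OCT[OF A1]] .
    fix x assume x: "x \<in> {1..n}"
    show "f x = clampf n A B d x"
      using claim[of x] clampf_val[OF x, of A B d] x A1 by simp
  qed
  have "B = min B (max A (int n + d))" using claim[of n] n by (simp add: B_def)
  moreover have "int n + d \<ge> A" using m1 by (simp add: d_def)
  ultimately have "B \<le> int n + d" by linarith
  moreover have "d \<le> A - 1" using m1 by (simp add: d_def)
  ultimately show ?thesis unfolding Cs_def using fc A1 by blast
qed

lemma Cs_Reg: assumes "f \<in> Cs n" shows "f \<in> RegOCT n"
proof -
  obtain A B d where c: "1 \<le> A" "A \<le> B" "B \<le> int n" "d \<le> A - 1" "B \<le> int n + d"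
    and f: "f = clampf n A B d" using assms by (auto simp: Cs_def)
  have fo: "f \<in> OCT n" using clampf_OCT[OF c(1-3)] f by simp
  define g where "g = clampf n 1 (int n) (- d)"
  have go: "g \<in> OCT n" using clampf_OCT[of 1 "int n" n "-d"] c unfolding g_def by simp
  have "tcomp n (tcomp n f g) f = f"
  proof (rule Tn_eqI)
    show "tcomp n (tcomp n f g) f \<in> Tn n" using tcomp_OCT[OF tcomp_OCT[OF fo go] fo] OCT_D by blast
    show "f \<in> Tn n" using OCT_D fo by blast
    fix x assume x: "x \<in> {1..n}"
    have fx: "int (f x) = min B (max A (int x + d))" using clampf_val[OF x, of A B d] c f by simp
    have fxi: "f x \<in> {1..n}" using OCT_range[OF fo x] .
    have gy: "int (g (f x)) = min (int n) (max 1 (int (f x) - d))"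
      using clampf_val[OF fxi, of 1 "int n" "-d"] c unfolding g_def by simp
    then have gy': "int (g (f x)) = int (f x) - d" using fx c by linarith
    have gyi: "g (f x) \<in> {1..n}" using OCT_range[OF go fxi] .
    have "int (f (g (f x))) = min B (max A (int (g (f x)) + d))" using clampf_val[OF gyi, of A B d] c f by simp
    also have "\<dots> = int (f x)" using gy' fx c by linarith
    finally show "tcomp n (tcomp n f g) f x = f x" using x fxi by simp
  qed
  then show ?thesis using fo go by (auto simp: RegOCT_def)
qed

lemma Reg_OCT: "f \<in> RegOCT n \<Longrightarrow> f \<in> OCT n" by (simp add: RegOCT_def)

lemma Reg_closed: assumes "f \<in> RegOCT n" "g \<in> RegOCT n" "1 \<le> n" shows "tcomp n f g \<in> RegOCT n"
proof -
  have o: "f \<in> OCT n" "g \<in> OCT n" using assms Reg_OCT by auto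
  have "Pc n (tcomp n f g)" using Pc_tcomp[OF o Reg_Pc[OF assms(1)] Reg_Pc[OF assms(2)]] .
  then show ?thesis using Cs_Reg Pc_Cs tcomp_OCT[OF o] assms(3) by blast
qed

lemma clampf_Tn: "1 \<le> A \<Longrightarrow> A \<le> B \<Longrightarrow> B \<le> int n \<Longrightarrow> clampf n A B d \<in> Tn n"
  using OCT_D(1)[OF clampf_OCT] by blast

lemma idn_clamp: "idn n = clampf n 1 (int n) 0"
  by (auto simp: idn_def clampf_def fun_eq_iff)

lemma comp_same: assumes n: "1 \<le> n" and s: "(e \<le> 0 \<and> f \<le> 0) \<or> (e \<ge> 0 \<and> f \<ge> 0)"
  shows "tcomp n (clampf n 1 (int n) e) (clampf n 1 (int n) f) = clampf n 1 (int n) (e + f)"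
proof (rule Tn_eqI)
  show "tcomp n (clampf n 1 (int n) e) (clampf n 1 (int n) f) \<in> Tn n"
    using tcomp_Tn clampf_Tn n by simp
  show "clampf n 1 (int n) (e + f) \<in> Tn n" using clampf_Tn n by simp
  fix x assume x: "x \<in> {1..n}"
  have y: "clampf n 1 (int n) e x \<in> {1..n}" using OCT_range[OF clampf_OCT x] n by simp
  have "int (clampf n 1 (int n) f (clampf n 1 (int n) e x)) = min (int n) (max 1 (int (clampf n 1 (int n) e x) + f))"
    using clampf_val[OF y] n by simp
  also have "\<dots> = min (int n) (max 1 (int x + (e + f)))"
    using clampf_val[OF x, of 1 "int n" e] n s x by (auto simp: min_def max_def split: if_splits)
  also have "\<dots> = int (clampf n 1 (int n) (e + f) x)" using clampf_val[OF x] n by simp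
  finally show "tcomp n (clampf n 1 (int n) e) (clampf n 1 (int n) f) x = clampf n 1 (int n) (e + f) x"
    using x by simp
qed

definition Gs :: "nat \<Rightarrow> (nat \<Rightarrow> nat) set" where
  "Gs n = {idn n, clampf n 1 (int n) (-1), clampf n 1 (int n) 1}"

lemma gen_neg: assumes n: "1 \<le> n" shows "clampf n 1 (int n) (- int k) \<in> gen n (Gs n)"
proof (induction k)
  case 0 then show ?case using idn_clamp by (auto intro: gen.base simp: Gs_def)
next
  case (Suc k)
  have "tcomp n (clampf n 1 (int n) (- int k)) (clampf n 1 (int n) (-1)) \<in> gen n (Gs n)"
    by (rule gen.step[OF Suc]) (auto intro: gen.base simp: Gs_def)
  moreover have "tcomp n (clampf n 1 (int n) (- int k)) (clampf n 1 (int n) (-1)) = clampf n 1 (int n) (- int k + (-1))"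
    by (rule comp_same[OF n]) simp
  moreover have "- int (Suc k) = - int k + (-1)" by simp
  ultimately show ?case by metis
qed

lemma gen_pos: assumes n: "1 \<le> n" shows "clampf n 1 (int n) (int k) \<in> gen n (Gs n)"
proof (induction k)
  case 0 then show ?case using idn_clamp by (auto intro: gen.base simp: Gs_def)
next
  case (Suc k)
  have "tcomp n (clampf n 1 (int n) (int k)) (clampf n 1 (int n) 1) \<in> gen n (Gs n)"
    by (rule gen.step[OF Suc]) (auto intro: gen.base simp: Gs_def)
  moreover have "tcomp n (clampf n 1 (int n) (int k)) (clampf n 1 (int n) 1) = clampf n 1 (int n) (int k + 1)"
    by (rule comp_same[OF n]) simp
  moreover have "int (Suc k) = int k + 1" by simp
  ultimately show ?case by metis
qed

lemma Cs_gen: assumes n: "1 \<le> n" and f: "f \<in> Cs n" shows "f \<in> gen n (Gs n)"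
proof -
  obtain A B d where c: "1 \<le> A" "A \<le> B" "B \<le> int n" "d \<le> A - 1" "B \<le> int n + d"
    and f: "f = clampf n A B d" using f by (auto simp: Cs_def)
  define k where "k = nat (A - 1 - d)"
  define j where "j = nat (A - 1 + int n - B)"
  define i where "i = nat (int n - B)"
  let ?K = "clampf n 1 (int n) (- int k)"
  let ?J = "clampf n 1 (int n) (int j)"
  let ?I = "clampf n 1 (int n) (- int i)"
  have "tcomp n (tcomp n ?K ?J) ?I \<in> gen n (Gs n)"
    using gen.step gen_neg gen_pos n by metis
  moreover have "tcomp n (tcomp n ?K ?J) ?I = f"
  proof (rule Tn_eqI)
    show "tcomp n (tcomp n ?K ?J) ?I \<in> Tn n" using tcomp_Tn clampf_Tn n by simp
    show "f \<in> Tn n" using clampf_Tn c f by simp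
    fix x assume x: "x \<in> {1..n}"
    have y: "?K x \<in> {1..n}" using OCT_range[OF clampf_OCT x] n by simp
    have z: "?J (?K x) \<in> {1..n}" using OCT_range[OF clampf_OCT y] n by simp
    have vy: "int (?K x) = min (int n) (max 1 (int x - int k))" using clampf_val[OF x] n by simp
    have vz: "int (?J (?K x)) = min (int n) (max 1 (int (?K x) + int j))" using clampf_val[OF y] n by simp
    have vw: "int (?I (?J (?K x))) = min (int n) (max 1 (int (?J (?K x)) - int i))" using clampf_val[OF z] n by simp
    have vf: "int (f x) = min B (max A (int x + d))" using clampf_val[OF x, of A B d] c f by simp
    have ints: "int k = A - 1 - d" "int j = A - 1 + int n - B" "int i = int n - B"
      using c by (auto simp: k_def j_def i_def)
    have "int (?I (?J (?K x))) = int (f x)"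
      using vy vz vw vf ints x c by (simp add: min_def max_def)
    then show "tcomp n (tcomp n ?K ?J) ?I x = f x" using x y by simp
  qed
  ultimately show ?thesis by simp
qed

lemma gen_sub: assumes "A \<subseteq> S" "\<And>a b. a \<in> S \<Longrightarrow> b \<in> S \<Longrightarrow> tcomp n a b \<in> S"
  shows "gen n A \<subseteq> S"
proof
  fix x assume "x \<in> gen n A" then show "x \<in> S"
    by induction (use assms in auto)
qed

lemma idn_Tn: "1 \<le> n \<Longrightarrow> idn n \<in> Tn n"
  using idn_clamp clampf_Tn by simp

lemma idn_Cs: assumes "1 \<le> n" shows "idn n \<in> Cs n"
proof -
  have "1 \<le> (1::int) \<and> 1 \<le> int n \<and> int n \<le> int n \<and> (0::int) \<le> 1 - 1 \<and> int n \<le> int n + 0 \<and> idn n = clampf n 1 (int n) 0"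
    using assms idn_clamp by simp
  then show ?thesis unfolding Cs_def by blast
qed

lemma L_Reg: assumes n: "1 \<le> n" shows "clampf n 1 (int n) (-1) \<in> RegOCT n"
proof -
  let ?L = "clampf n 1 (int n) (-1)"
  have o: "?L \<in> OCT n" using clampf_OCT n by simp
  have "Pc n ?L" unfolding Pc_def
  proof (intro allI impI)
    fix x assume x: "1 \<le> x" "x < n" "?L (Suc x) = ?L x"
    have i: "x \<in> {1..n}" "Suc x \<in> {1..n}" using x by auto
    have "int (?L (Suc x)) = int (?L x)" using x by simp
    then have "x = 1" using clampf_val[OF i(1), of 1 "int n" "-1"] clampf_val[OF i(2), of 1 "int n" "-1"] x
      by (simp add: min_def max_def split: if_splits)
    then show "?L x = ?L 1 \<or> ?L x = ?L n" by simp
  qed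
  then show ?thesis using Pc_Cs[OF o _ n] Cs_Reg by blast
qed

lemma R_Reg: assumes n: "1 \<le> n" shows "clampf n 1 (int n) 1 \<in> RegOCT n"
proof -
  let ?L = "clampf n 1 (int n) 1"
  have o: "?L \<in> OCT n" using clampf_OCT n by simp
  have "Pc n ?L" unfolding Pc_def
  proof (intro allI impI)
    fix x assume x: "1 \<le> x" "x < n" "?L (Suc x) = ?L x"
    have i: "x \<in> {1..n}" "Suc x \<in> {1..n}" "n \<in> {1..n}" using x by auto
    have "int (?L (Suc x)) = int (?L x)" using x by simp
    then have "int (?L x) = int (?L n)" using clampf_val[OF i(1), of 1 "int n" "1"] clampf_val[OF i(2), of 1 "int n" "1"]
      clampf_val[OF i(3), of 1 "int n" "1"] x
      by (simp add: min_def max_def split: if_splits)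
    then show "?L x = ?L 1 \<or> ?L x = ?L n" by simp
  qed
  then show ?thesis using Pc_Cs[OF o _ n] Cs_Reg by blast
qed

lemma Gs_Reg: "1 \<le> n \<Longrightarrow> Gs n \<subseteq> RegOCT n"
  using L_Reg R_Reg idn_Cs Cs_Reg by (auto simp: Gs_def)

lemma Reg_gen: assumes n: "1 \<le> n" shows "gen n (Gs n) = RegOCT n"
proof
  show "gen n (Gs n) \<subseteq> RegOCT n" by (rule gen_sub[OF Gs_Reg[OF n]]) (use Reg_closed n in auto)
  show "RegOCT n \<subseteq> gen n (Gs n)"
    using Reg_Pc Pc_Cs Cs_gen Reg_OCT n by blast
qed

lemma Gs_card: assumes n: "3 \<le> n" shows "card (Gs n) = 3"
proof -
  have i: "2 \<in> {1..n}" using n by auto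
  have a: "idn n 2 = 2" using i by (simp add: idn_def)
  have b: "clampf n 1 (int n) (-1) 2 = 1" using i by (simp add: clampf_def)
  have c: "clampf n 1 (int n) 1 2 = 3" using i n by (simp add: clampf_def)
  have "idn n \<noteq> clampf n 1 (int n) (-1)"
  proof
    assume h: "idn n = clampf n 1 (int n) (-1)"
    show False using arg_cong[OF h, of "\<lambda>f. f 2"] a b by simp
  qed
  moreover have "idn n \<noteq> clampf n 1 (int n) 1"
  proof
    assume h: "idn n = clampf n 1 (int n) 1"
    show False using arg_cong[OF h, of "\<lambda>f. f 2"] a c by simp
  qed
  moreover have "clampf n 1 (int n) (-1) \<noteq> clampf n 1 (int n) 1"
  proof
    assume h: "clampf n 1 (int n) (-1) = clampf n 1 (int n) 1"
    show False using arg_cong[OF h, of "\<lambda>f. f 2"] b c by simp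
  qed
  ultimately show ?thesis by (simp add: Gs_def)
qed

lemma id_only: assumes n: "1 \<le> n" and a: "a \<in> OCT n" and b: "b \<in> OCT n" and e: "tcomp n a b = idn n"
  shows "a = idn n"
proof -
  have ba: "b (a x) = x" if "x \<in> {1..n}" for x
    using fun_cong[OF e, of x] that by (simp add: idn_def)
  have claim: "int (a x) = int x + int (a 1) - 1" if "1 \<le> x" "x \<le> n" for x
    using that
  proof (induction x)
    case 0 then show ?case by simp
  next
    case (Suc x)
    show ?case
    proof (cases "x = 0")
      case True then show ?thesis by simp
    next
      case False
      then have x1: "1 \<le> x" "x < n" using Suc.prems by auto
      have "a (Suc x) \<noteq> a x" using ba[of x] ba[of "Suc x"] x1 by force
      then have "a (Suc x) = Suc (a x)" using OCT_step[OF a x1] by auto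
      then show ?thesis using Suc.IH x1 by simp
    qed
  qed
  have a1: "a 1 = 1"
  proof -
    have "int (a n) = int n + int (a 1) - 1" using claim[of n] n by simp
    moreover have "a n \<le> n" "1 \<le> a 1" using OCT_range[OF a, of n] OCT_range[OF a, of 1] n by auto
    ultimately show ?thesis by linarith
  qed
  show ?thesis
  proof (rule Tn_eqI)
    show "a \<in> Tn n" using OCT_D a by blast
    show "idn n \<in> Tn n" using idn_Tn n .
    fix x assume x: "x \<in> {1..n}"
    show "a x = idn n x" using claim[of x] x a1 by (simp add: idn_def)
  qed
qed

lemma gen_OCT: "A \<subseteq> OCT n \<Longrightarrow> gen n A \<subseteq> OCT n"
  by (rule gen_sub) (auto intro: tcomp_OCT)

lemma id_in: assumes "x \<in> gen n A" "A \<subseteq> OCT n" "1 \<le> n" shows "x = idn n \<Longrightarrow> idn n \<in> A"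
  using assms(1)
proof induction
  case (base a) then show ?case by simp
next
  case (step a b)
  have "a \<in> OCT n" "b \<in> OCT n" using step.hyps gen_OCT[OF assms(2)] by auto
  then have "a = idn n" using id_only[OF assms(3)] step.prems by blast
  then show ?case using step.IH by simp
qed

lemma gen_Tn: "A \<subseteq> Tn n \<Longrightarrow> gen n A \<subseteq> Tn n"
  by (rule gen_sub) (auto intro: tcomp_Tn)

lemma gen_comm1: assumes T: "A \<subseteq> Tn n" and c: "\<And>a b. a \<in> A \<Longrightarrow> b \<in> A \<Longrightarrow> tcomp n a b = tcomp n b a"
  and x: "x \<in> gen n A" shows "\<forall>c\<in>A. tcomp n x c = tcomp n c x"
  using x
proof induction
  case (base a) then show ?case using c by blast
next
  case (step a b)
  have Ta: "a \<in> Tn n" "b \<in> Tn n" using step.hyps gen_Tn[OF T] by auto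
  show ?case
  proof
    fix e assume e: "e \<in> A"
    have Te: "e \<in> Tn n" using e T by auto
    have "tcomp n (tcomp n a b) e = tcomp n a (tcomp n b e)" using tcomp_assoc Ta by blast
    also have "\<dots> = tcomp n a (tcomp n e b)" using step.IH e by simp
    also have "\<dots> = tcomp n (tcomp n a e) b" using tcomp_assoc Ta by metis
    also have "\<dots> = tcomp n (tcomp n e a) b" using step.IH e by simp
    also have "\<dots> = tcomp n e (tcomp n a b)" using tcomp_assoc Te by blast
    finally show "tcomp n (tcomp n a b) e = tcomp n e (tcomp n a b)" .
  qed
qed

lemma gen_comm: assumes T: "A \<subseteq> Tn n" and c: "\<And>a b. a \<in> A \<Longrightarrow> b \<in> A \<Longrightarrow> tcomp n a b = tcomp n b a"
  and y: "y \<in> gen n A" shows "\<forall>x\<in>gen n A. tcomp n x y = tcomp n y x"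
  using y
proof induction
  case (base a) then show ?case using gen_comm1[OF T c] by blast
next
  case (step a b)
  have Ta: "a \<in> Tn n" "b \<in> Tn n" using step.hyps gen_Tn[OF T] by auto
  show ?case
  proof
    fix x assume x: "x \<in> gen n A"
    have Tx: "x \<in> Tn n" using x gen_Tn[OF T] by auto
    have "tcomp n x (tcomp n a b) = tcomp n (tcomp n x a) b" using tcomp_assoc Tx by metis
    also have "\<dots> = tcomp n (tcomp n a x) b" using step.IH x by simp
    also have "\<dots> = tcomp n a (tcomp n x b)" using tcomp_assoc Ta by blast
    also have "\<dots> = tcomp n a (tcomp n b x)" using step.IH x by simp
    also have "\<dots> = tcomp n (tcomp n a b) x" using tcomp_assoc Ta by metis
    finally show "tcomp n x (tcomp n a b) = tcomp n (tcomp n a b) x" .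
  qed
qed

lemma LR_noncomm: assumes n: "2 \<le> n"
  shows "tcomp n (clampf n 1 (int n) (-1)) (clampf n 1 (int n) 1) \<noteq> tcomp n (clampf n 1 (int n) 1) (clampf n 1 (int n) (-1))"
proof
  assume h: "tcomp n (clampf n 1 (int n) (-1)) (clampf n 1 (int n) 1) = tcomp n (clampf n 1 (int n) 1) (clampf n 1 (int n) (-1))"
  have i: "1 \<in> {1..n}" "2 \<in> {1..n}" using n by auto
  have "clampf n 1 (int n) (-1) 1 = 1" "clampf n 1 (int n) 1 1 = 2" "clampf n 1 (int n) (-1) 2 = 1"
    using i n by (simp_all add: clampf_def)
  then show False using arg_cong[OF h, of "\<lambda>f. f 1"] i by simp
qed

lemma lower: assumes n: "2 \<le> n" and A: "A \<subseteq> RegOCT n" "finite A" "gen n A = RegOCT n"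
  shows "3 \<le> card A"
proof (rule ccontr)
  assume small: "\<not> 3 \<le> card A"
  have n1: "1 \<le> n" using n by simp
  have AO: "A \<subseteq> OCT n" using A Reg_OCT by auto
  have AT: "A \<subseteq> Tn n" using AO OCT_D by blast
  have "idn n \<in> gen n A" using A idn_Cs[OF n1] Cs_Reg by auto
  then have idA: "idn n \<in> A" using id_in AO n1 by blast
  have c: "tcomp n a b = tcomp n b a" if ab: "a \<in> A" "b \<in> A" for a b
  proof -
    have Tab: "a \<in> Tn n" "b \<in> Tn n" using ab AT by auto
    show ?thesis
    proof (cases "a = b \<or> a = idn n \<or> b = idn n")
      case True then show ?thesis using idn_left idn_right Tab by auto
    next
      case False
      then have "card {idn n, a, b} = 3" by auto
      moreover have "card {idn n, a, b} \<le> card A" using idA ab A(2) by (intro card_mono) auto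
      ultimately show ?thesis using small by simp
    qed
  qed
  have "clampf n 1 (int n) (-1) \<in> gen n A" "clampf n 1 (int n) 1 \<in> gen n A"
    using A L_Reg[OF n1] R_Reg[OF n1] by auto
  then show False using gen_comm[OF AT c] LR_noncomm[OF n] by blast
qed

theorem corollary13:
  fixes n :: nat
  assumes "n \<ge> 4"
  shows "sg_rank n (RegOCT n) = 3"
  unfolding sg_rank_def
proof (rule Least_equality)
  have n1: "1 \<le> n" using assms by simp
  show "\<exists>A. A \<subseteq> RegOCT n \<and> finite A \<and> card A = 3 \<and> gen n A = RegOCT n"
    using Gs_Reg[OF n1] Gs_card[of n] assms Reg_gen[OF n1] by (intro exI[of _ "Gs n"]) (auto simp: Gs_def)
next
  fix k assume "\<exists>A. A \<subseteq> RegOCT n \<and> finite A \<and> card A = k \<and> gen n A = RegOCT n"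
  then obtain A where "A \<subseteq> RegOCT n" "finite A" "card A = k" "gen n A = RegOCT n" by blast
  then show "3 \<le> k" using lower[of n A] assms by simp
qed

end
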